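(* Let $r\in(0,1]$ and assume every valuation $v_i$ is homogeneous of degree $r$, concave, and differentiable. Fix $\rho\in(0,1]$. Then for any allocation $\mathbf{x}$, we have $\mathbf{x}\in\Psi(\rho)$ if and only if there exist $q_1,\dots,q_m\in\mathbb{R}_{\ge 0}$ such that, for the pricing rule \[ p(y)=\rho\, r^{\frac{\rho-1}{\rho}}\Big(\sum_{j\in M}q_j y_j\Big)^{1/\rho}\qquad (y\in\mathbb{R}^m_{\ge0}), \] $(\mathbf{x},p)$ is a Walrasian equilibrium. Furthermore, such $q_1,\dots,q_m$ are optimal Lagrange multipliers for Program $(P_\rho)$.
   Context: Setup: agents $N=\{1,\dots,n\}$, divisible goods $M=\{1,\dots,m\}$, each of supply $1$. An allocation is $\mathbf{x}=(x_1,\dots,x_n)$ with bundles $x_i\in\mathbb{R}^m_{\ge0}$ ($x_{ij}$ = amount of good $j$ given to agent $i$) satisfying $\sum_i x_{ij}\le 1$ for all $j$. Each agent $i$ has a valuation $v_i:\mathbb{R}^m_{\ge0}\to\mathbb{R}_{\ge0}$ that is monotone (coordinatewise larger bundles have weakly larger value), normalized ($v_i(0)=0$), and not identically zero. $v_i$ is homogeneous of degree $r$ if $v_i(\lambda y)=\lambda^r v_i(y)$ for all $\lambda\ge0$ and bundles $y$. Agents have quasilinear utility: under a pricing rule $p:\mathbb{R}^m_{\ge0}\to\mathbb{R}$, agent $i$'s demand set is $D_i(p)=\arg\max_{y\in\mathbb{R}^m_{\ge0}}(v_i(y)-p(y))$. Good $j$ has nonzero cost under $p$ if there is a bundle $y$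 with $y_\ell=0$ for all $\ell\ne j$ and $p(y)>0$. $(\mathbf{x},p)$ is a Walrasian equilibrium (WE) if $x_i\in D_i(p)$ for every $i$, $\sum_i x_{ij}\le 1$ for every $j$, and $\sum_i x_{ij}=1$ for every good $j$ of nonzero cost. For $\rho\in(0,1]$, $\Psi(\rho)$ is the set of allocations maximizing the CES welfare $\Phi(\rho,\mathbf{x})=(\sum_{i}v_i(x_i)^\rho)^{1/\rho}$ over all allocations. Program $(P_\rho)$: maximize $\frac1\rho\sum_i v_i(x_i)^\rho$ over $\mathbf{x}\in\mathbb{R}^{n\times m}_{\ge0}$ subject to $\sum_i x_{ij}\le1$ for all $j$. For differentiable $v_i$, $q\in\mathbb{R}^m_{\ge0}$ is a vector of optimal Lagrange multipliers for $(P_\rho)$ if there is an optimal $\mathbf{x}$ such that (i) for all $i,j$: $v_i(x_i)^{\rho-1}\frac{\partial v_i(x_i)}{\partial x_{ij}}\le q_j$, with equality whenever $x_{ij}>0$; and (ii) $q_j=0$ whenever $\sum_i x_{ij}<1$. *)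

theory Defs
  imports "HOL-Analysis.Analysis"
begin

text \<open>Agents are the elements of a finite type 'a, goods the elements of a finite
  type 'm; a bundle is a vector in real^'m with nonnegative entries.\<close>

definition orthant :: "(real^'m) set" where
  "orthant = {y. \<forall>j. 0 \<le> y $ j}"

definition valuation :: "(real^'m \<Rightarrow> real) \<Rightarrow> bool" where
  "valuation v \<longleftrightarrow>
     (\<forall>y\<in>orthant. \<forall>z\<in>orthant. (\<forall>j. y $ j \<le> z $ j) \<longrightarrow> v y \<le> v z) \<and>
     v 0 = 0 \<and> (\<forall>y\<in>orthant. 0 \<le> v y) \<and> (\<exists>y\<in>orthant. v y \<noteq> 0)"

definition homogeneous :: "real \<Rightarrow> (real^'m \<Rightarrow> real) \<Rightarrow> bool" where
  "homogeneous r v \<longleftrightarrow> (\<forall>c\<ge>0. \<forall>y\<in>orthant. v (c *\<^sub>R y) = c powr r * v y)"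

definition allocation :: "('a::finite \<Rightarrow> real^'m::finite) \<Rightarrow> bool" where
  "allocation x \<longleftrightarrow> (\<forall>i. x i \<in> orthant) \<and> (\<forall>j. (\<Sum>i\<in>UNIV. x i $ j) \<le> 1)"

definition demand :: "(real^'m \<Rightarrow> real) \<Rightarrow> (real^'m \<Rightarrow> real) \<Rightarrow> (real^'m) set" where
  "demand v p = {y \<in> orthant. \<forall>z\<in>orthant. v z - p z \<le> v y - p y}"

definition nonzero_cost :: "(real^'m \<Rightarrow> real) \<Rightarrow> 'm \<Rightarrow> bool" where
  "nonzero_cost p j \<longleftrightarrow> (\<exists>y\<in>orthant. (\<forall>l. l \<noteq> j \<longrightarrow> y $ l = 0) \<and> p y > 0)"

definition walrasian_eq ::
  "('a::finite \<Rightarrow> real^'m \<Rightarrow> real) \<Rightarrow> ('a \<Rightarrow> real^'m::finite) \<Rightarrow> (real^'m \<Rightarrow> real) \<Rightarrow> bool" where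
  "walrasian_eq v x p \<longleftrightarrow>
     (\<forall>i. x i \<in> demand (v i) p) \<and>
     (\<forall>j. (\<Sum>i\<in>UNIV. x i $ j) \<le> 1) \<and>
     (\<forall>j. nonzero_cost p j \<longrightarrow> (\<Sum>i\<in>UNIV. x i $ j) = 1)"

definition ces_welfare :: "('a::finite \<Rightarrow> real^'m \<Rightarrow> real) \<Rightarrow> real \<Rightarrow> ('a \<Rightarrow> real^'m) \<Rightarrow> real" where
  "ces_welfare v \<rho> x = (\<Sum>i\<in>UNIV. (v i (x i)) powr \<rho>) powr (1 / \<rho>)"

definition Psi :: "('a::finite \<Rightarrow> real^'m::finite \<Rightarrow> real) \<Rightarrow> real \<Rightarrow> ('a \<Rightarrow> real^'m) set" where
  "Psi v \<rho> = {x. allocation x \<and> (\<forall>x'. allocation x' \<longrightarrow> ces_welfare v \<rho> x' \<le> ces_welfare v \<rho> x)}"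

definition P_obj :: "('a::finite \<Rightarrow> real^'m \<Rightarrow> real) \<Rightarrow> real \<Rightarrow> ('a \<Rightarrow> real^'m) \<Rightarrow> real" where
  "P_obj v \<rho> x = (1 / \<rho>) * (\<Sum>i\<in>UNIV. (v i (x i)) powr \<rho>)"

definition P_optimal :: "('a::finite \<Rightarrow> real^'m::finite \<Rightarrow> real) \<Rightarrow> real \<Rightarrow> ('a \<Rightarrow> real^'m) \<Rightarrow> bool" where
  "P_optimal v \<rho> x \<longleftrightarrow> allocation x \<and> (\<forall>x'. allocation x' \<longrightarrow> P_obj v \<rho> x' \<le> P_obj v \<rho> x)"

definition partial_deriv :: "(real^'m \<Rightarrow> real) \<Rightarrow> real^'m \<Rightarrow> 'm \<Rightarrow> real \<Rightarrow> bool" where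
  "partial_deriv v y j d \<longleftrightarrow>
     ((\<lambda>t. v (y + t *\<^sub>R axis j 1)) has_real_derivative d) (at 0 within {0..})"

definition optimal_lagrange ::
  "('a::finite \<Rightarrow> real^'m::finite \<Rightarrow> real) \<Rightarrow> real \<Rightarrow> real^'m \<Rightarrow> bool" where
  "optimal_lagrange v \<rho> q \<longleftrightarrow> q \<in> orthant \<and>
     (\<exists>x. P_optimal v \<rho> x \<and>
        (\<forall>i j. \<exists>d. partial_deriv (v i) (x i) j d \<and>
            (v i (x i)) powr (\<rho> - 1) * d \<le> q $ j \<and>
            (x i $ j > 0 \<longrightarrow> (v i (x i)) powr (\<rho> - 1) * d = q $ j)) \<and>
        (\<forall>j. (\<Sum>i\<in>UNIV. x i $ j) < 1 \<longrightarrow> q $ j = 0))"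

definition ces_price :: "real \<Rightarrow> real \<Rightarrow> real^'m::finite \<Rightarrow> real^'m \<Rightarrow> real" where
  "ces_price r \<rho> q y = \<rho> * r powr ((\<rho> - 1) / \<rho>) * (\<Sum>j\<in>UNIV. q $ j * y $ j) powr (1 / \<rho>)"

end

theory Submission
  imports Defs
begin

definition qd :: "real^'m::finite \<Rightarrow> real^'m \<Rightarrow> real" where
  "qd q y = (\<Sum>j\<in>UNIV. q $ j * y $ j)"

lemma orthant_scale: "c \<ge> 0 \<Longrightarrow> y \<in> orthant \<Longrightarrow> c *\<^sub>R y \<in> orthant"
  by (simp add: orthant_def)

lemma orthant_zero: "0 \<in> orthant" by (simp add: orthant_def)

lemma qd_scale: "qd q (c *\<^sub>R y) = c * qd q y"
  by (simp add: qd_def sum_distrib_left algebra_simps)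

lemma qd_zero: "qd q 0 = 0" by (simp add: qd_def)

lemma qd_nonneg: "q \<in> orthant \<Longrightarrow> y \<in> orthant \<Longrightarrow> qd q y \<ge> 0"
  by (auto simp: qd_def orthant_def intro!: sum_nonneg)

lemma price_eq: "ces_price r \<rho> q y = \<rho> * r powr ((\<rho>-1)/\<rho>) * qd q y powr (1/\<rho>)"
  by (simp add: ces_price_def qd_def)

lemma bern:
  fixes u k :: real
  assumes "u \<ge> 0" "k \<ge> 1"
  shows "u - u powr k / k \<le> 1 - 1/k"
proof (cases "u = 0")
  case True then show ?thesis using assms by simp
next
  case False
  then have u: "u > 0" using assms by simp
  have "(u powr k) powr (1/k) * 1 powr (1 - 1/k) \<le> (1/k) * u powr k + (1 - 1/k) * 1"
    by (rule Youngs_inequality_0) (use assms u in auto)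
  moreover have "(u powr k) powr (1/k) = u" using assms u by (simp add: powr_powr)
  ultimately show ?thesis by simp
qed

lemma hom_val: "homogeneous r v \<Longrightarrow> c \<ge> 0 \<Longrightarrow> y \<in> orthant \<Longrightarrow> v (c *\<^sub>R y) = c powr r * v y"
  by (simp add: homogeneous_def)

lemma ray_L:
  assumes hom: "homogeneous r v" and v0: "v 0 = 0" and vx: "v x \<ge> 0"
    and rho: "0 < \<rho>" and x: "x \<in> orthant" and q: "q \<in> orthant"
    and L: "\<forall>y\<in>orthant. (1/\<rho>) * v y powr \<rho> - qd q y \<le> (1/\<rho>) * v x powr \<rho> - qd q x"
  shows "qd q x = r * v x powr \<rho>"
proof (cases "v x = 0")
  case True
  have "(1/\<rho>) * v 0 powr \<rho> - qd q 0 \<le> (1/\<rho>) * v x powr \<rho> - qd q x"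
    using L orthant_zero by blast
  then have "qd q x \<le> 0" using True v0 by (simp add: qd_zero)
  then show ?thesis using qd_nonneg[OF q x] True by simp
next
  case False
  then have V: "v x > 0" using vx by simp
  define \<phi> where "\<phi> l = (1/\<rho>) * (l powr (r*\<rho>) * v x powr \<rho>) - l * qd q x" for l :: real
  have le: "\<forall>l. \<bar>1 - l\<bar> < 1/2 \<longrightarrow> \<phi> l \<le> \<phi> 1"
  proof (intro allI impI)
    fix l :: real assume "\<bar>1 - l\<bar> < 1/2"
    then have l: "l > 0" by linarith
    have "(1/\<rho>) * v (l *\<^sub>R x) powr \<rho> - qd q (l *\<^sub>R x) \<le> (1/\<rho>) * v x powr \<rho> - qd q x"
      using L orthant_scale[of l x] l x by auto
    moreover have "v (l *\<^sub>R x) powr \<rho> = l powr (r*\<rho>) * v x powr \<rho>"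
      using hom_val[OF hom, of l x] l x vx by (simp add: powr_mult powr_powr)
    ultimately show "\<phi> l \<le> \<phi> 1" by (simp add: \<phi>_def qd_scale)
  qed
  have der: "(\<phi> has_real_derivative (1/\<rho>) * ((r*\<rho>) * 1 powr (r*\<rho> - 1) * v x powr \<rho>) - 1 * qd q x) (at 1)"
    unfolding \<phi>_def by (rule derivative_eq_intros refl | simp)+
  have "(1/\<rho>) * ((r*\<rho>) * 1 powr (r*\<rho> - 1) * v x powr \<rho>) - 1 * qd q x = 0"
    by (rule DERIV_local_max[OF der _ le]) simp
  then show ?thesis using rho by simp
qed

lemma powr_inv_cancel: "(b::real) \<ge> 0 \<Longrightarrow> \<rho> > 0 \<Longrightarrow> (b powr (1/\<rho>)) powr \<rho> = b"
  by (simp add: powr_powr)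

lemma price_key_dir:
  fixes V r \<rho> :: real
  assumes "V \<ge> 0" "r > 0" "\<rho> > 0"
  shows "\<rho> * r powr ((\<rho>-1)/\<rho>) * (r * V powr \<rho>) powr (1/\<rho>) = \<rho> * r * V"
proof -
  have "(r * V powr \<rho>) powr (1/\<rho>) = r powr (1/\<rho>) * (V powr \<rho>) powr (1/\<rho>)"
    using assms by (simp add: powr_mult)
  also have "(V powr \<rho>) powr (1/\<rho>) = V"
    using assms by (simp add: powr_powr)
  finally have "(r * V powr \<rho>) powr (1/\<rho>) = r powr (1/\<rho>) * V" .
  moreover have "r powr ((\<rho>-1)/\<rho>) * r powr (1/\<rho>) = r"
  proof -
    have "r powr ((\<rho>-1)/\<rho>) * r powr (1/\<rho>) = r powr ((\<rho>-1)/\<rho> + 1/\<rho>)"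
      by (simp add: powr_add)
    also have "(\<rho>-1)/\<rho> + 1/\<rho> = 1" using assms by (simp add: field_simps)
    finally show ?thesis using assms by simp
  qed
  ultimately show ?thesis by (metis mult.assoc mult.commute)
qed

lemma price_key:
  fixes V B r \<rho> :: real
  assumes "V \<ge> 0" "B \<ge> 0" "r > 0" "\<rho> > 0"
    and "\<rho> * r powr ((\<rho>-1)/\<rho>) * B powr (1/\<rho>) = \<rho> * r * V"
  shows "B = r * V powr \<rho>"
proof -
  have c: "\<rho> * r powr ((\<rho>-1)/\<rho>) > 0" using assms by (intro mult_pos_pos) auto
  have "\<rho> * r powr ((\<rho>-1)/\<rho>) * B powr (1/\<rho>) = \<rho> * r powr ((\<rho>-1)/\<rho>) * (r * V powr \<rho>) powr (1/\<rho>)"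
    using assms(5) price_key_dir[OF assms(1,3,4)] by linarith
  then have "B powr (1/\<rho>) = (r * V powr \<rho>) powr (1/\<rho>)" using c by (metis less_irrefl mult_cancel_left)
  then have "(B powr (1/\<rho>)) powr \<rho> = ((r * V powr \<rho>) powr (1/\<rho>)) powr \<rho>" by simp
  then show ?thesis using assms by (simp add: powr_inv_cancel)
qed

lemma ray_dem:
  assumes hom: "homogeneous r v" and v0: "v 0 = 0" and vx: "v x \<ge> 0"
    and rho: "0 < \<rho>" and r: "0 < r" and x: "x \<in> orthant" and q: "q \<in> orthant"
    and D: "\<forall>y\<in>orthant. v y - \<rho> * r powr ((\<rho>-1)/\<rho>) * qd q y powr (1/\<rho>)
               \<le> v x - \<rho> * r powr ((\<rho>-1)/\<rho>) * qd q x powr (1/\<rho>)"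
  shows "qd q x = r * v x powr \<rho>"
proof -
  define c where "c = \<rho> * r powr ((\<rho>-1)/\<rho>)"
  have c: "c > 0" using rho r unfolding c_def by (intro mult_pos_pos) auto
  have B: "qd q x \<ge> 0" using qd_nonneg[OF q x] .
  show ?thesis
  proof (cases "v x = 0")
    case True
    have "v 0 - c * qd q 0 powr (1/\<rho>) \<le> v x - c * qd q x powr (1/\<rho>)"
      using D orthant_zero unfolding c_def by blast
    then have "c * qd q x powr (1/\<rho>) \<le> 0" using True v0 by (simp add: qd_zero)
    then have "qd q x powr (1/\<rho>) \<le> 0" using c by (simp add: mult_le_0_iff)
    then have "qd q x = 0" using B by (smt (verit) powr_gt_zero)
    then show ?thesis using True by simp
  next
    case False
    then have V: "v x > 0" using vx by simp
    define \<phi> where "\<phi> l = l powr r * v x - c * (l powr (1/\<rho>) * qd q x powr (1/\<rho>))" for l :: real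
    have le: "\<forall>l. \<bar>1 - l\<bar> < 1/2 \<longrightarrow> \<phi> l \<le> \<phi> 1"
    proof (intro allI impI)
      fix l :: real assume "\<bar>1 - l\<bar> < 1/2"
      then have l: "l > 0" by linarith
      have "v (l *\<^sub>R x) - c * qd q (l *\<^sub>R x) powr (1/\<rho>) \<le> v x - c * qd q x powr (1/\<rho>)"
        using D orthant_scale[of l x] l x unfolding c_def by auto
      moreover have "v (l *\<^sub>R x) = l powr r * v x"
        using hom_val[OF hom, of l x] l x by simp
      moreover have "qd q (l *\<^sub>R x) powr (1/\<rho>) = l powr (1/\<rho>) * qd q x powr (1/\<rho>)"
        using l B by (simp add: qd_scale powr_mult)
      ultimately show "\<phi> l \<le> \<phi> 1" by (simp add: \<phi>_def)
    qed
    have der: "(\<phi> has_real_derivative r * 1 powr (r - 1) * v x - c * ((1/\<rho>) * 1 powr (1/\<rho> - 1) * qd q x powr (1/\<rho>))) (at 1)"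
      unfolding \<phi>_def by (rule derivative_eq_intros refl | simp)+
    have "r * 1 powr (r - 1) * v x - c * ((1/\<rho>) * 1 powr (1/\<rho> - 1) * qd q x powr (1/\<rho>)) = 0"
      by (rule DERIV_local_max[OF der _ le]) simp
    then have "c * qd q x powr (1/\<rho>) = \<rho> * r * v x" using rho by (simp add: field_simps)
    then show ?thesis using price_key[OF vx B r rho] unfolding c_def by simp
  qed
qed

definition Lc :: "real \<Rightarrow> real^'m::finite \<Rightarrow> (real^'m \<Rightarrow> real) \<Rightarrow> real^'m \<Rightarrow> bool" where
  "Lc \<rho> q v x \<longleftrightarrow> (\<forall>y\<in>orthant. (1/\<rho>) * v y powr \<rho> - qd q y \<le> (1/\<rho>) * v x powr \<rho> - qd q x)"

definition Dc :: "real \<Rightarrow> real \<Rightarrow> real^'m::finite \<Rightarrow> (real^'m \<Rightarrow> real) \<Rightarrow> real^'m \<Rightarrow> bool" where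
  "Dc r \<rho> q v x \<longleftrightarrow> (\<forall>y\<in>orthant. v y - \<rho> * r powr ((\<rho>-1)/\<rho>) * qd q y powr (1/\<rho>)
               \<le> v x - \<rho> * r powr ((\<rho>-1)/\<rho>) * qd q x powr (1/\<rho>))"

lemma demand_Dc: "x \<in> demand v (ces_price r \<rho> q) \<longleftrightarrow> x \<in> orthant \<and> Dc r \<rho> q v x"
  by (auto simp: demand_def Dc_def price_eq)

lemma no_small:
  fixes A K e :: real
  assumes "A > 0" "K \<ge> 0" "e > 0" and H: "\<And>l. l > 0 \<Longrightarrow> A \<le> l powr e * K"
  shows False
proof -
  define l where "l = (A/(K+1)) powr (1/e)"
  have l: "l > 0" using assms by (simp add: l_def)
  have "l powr e = A/(K+1)" using assms by (simp add: l_def powr_powr)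
  then have "A \<le> A/(K+1) * K" using H[OF l] by simp
  moreover have "A/(K+1) * K < A" using assms by (simp add: field_simps)
  ultimately show False by simp
qed

lemma rr_one:
  fixes r \<rho> :: real
  assumes "0 < r" "r \<le> 1" "0 < \<rho>" "\<rho> \<le> 1" "\<not> r * \<rho> < 1"
  shows "r = 1 \<and> \<rho> = 1"
proof -
  have "r * \<rho> \<le> r" "r * \<rho> \<le> \<rho>" using assms by (auto intro: mult_right_le_one_le mult_left_le_one_le)
  then show ?thesis using assms by linarith
qed

lemma val_pos: "valuation v \<Longrightarrow> \<exists>y\<in>orthant. v y > 0"
  unfolding valuation_def by (metis less_eq_real_def)

lemma V0_L:
  assumes val: "valuation v" and hom: "homogeneous r v"
    and r: "0 < r" "r \<le> 1" and rho: "0 < \<rho>" "\<rho> \<le> 1" and x: "x \<in> orthant" and q: "q \<in> orthant"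
    and L: "Lc \<rho> q v x" and V: "v x = 0"
  shows "r = 1 \<and> \<rho> = 1"
proof (rule rr_one[OF r rho], rule notI)
  assume rr: "r * \<rho> < 1"
  have v0: "v 0 = 0" and vnn: "\<And>y. y \<in> orthant \<Longrightarrow> v y \<ge> 0" using val by (auto simp: valuation_def)
  have B: "qd q x = 0" using ray_L[OF hom v0 vnn[OF x] rho(1) x q L[unfolded Lc_def]] V by simp
  obtain y where y: "y \<in> orthant" "v y > 0" using val_pos[OF val] by blast
  show False
  proof (rule no_small[of "(1/\<rho>) * v y powr \<rho>" "qd q y" "1 - r*\<rho>"])
    show "0 < (1/\<rho>) * v y powr \<rho>" using y rho by simp
    show "0 \<le> qd q y" using qd_nonneg[OF q y(1)] .
    show "0 < 1 - r*\<rho>" using rr by simp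
    fix l :: real assume l: "l > 0"
    have "(1/\<rho>) * v (l *\<^sub>R y) powr \<rho> - qd q (l *\<^sub>R y) \<le> (1/\<rho>) * v x powr \<rho> - qd q x"
      using L orthant_scale[of l y] l y unfolding Lc_def by auto
    moreover have "v (l *\<^sub>R y) powr \<rho> = l powr (r*\<rho>) * v y powr \<rho>"
      using hom_val[OF hom, of l y] l y vnn[OF y(1)] by (simp add: powr_mult powr_powr)
    ultimately have "(1/\<rho>) * (l powr (r*\<rho>) * v y powr \<rho>) \<le> l * qd q y"
      using V B rho by (simp add: qd_scale)
    moreover have "l = l powr (r*\<rho>) * l powr (1 - r*\<rho>)" using l by (simp flip: powr_add)
    ultimately have "l powr (r*\<rho>) * ((1/\<rho>) * v y powr \<rho>) \<le> l powr (r*\<rho>) * (l powr (1 - r*\<rho>) * qd q y)"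
      by (metis mult.assoc mult.left_commute)
    then show "(1/\<rho>) * v y powr \<rho> \<le> l powr (1 - r*\<rho>) * qd q y"
      by (rule mult_left_le_imp_le) (use l in simp)
  qed
qed

lemma V0_D:
  assumes val: "valuation v" and hom: "homogeneous r v"
    and r: "0 < r" "r \<le> 1" and rho: "0 < \<rho>" "\<rho> \<le> 1" and x: "x \<in> orthant" and q: "q \<in> orthant"
    and D: "Dc r \<rho> q v x" and V: "v x = 0"
  shows "r = 1 \<and> \<rho> = 1"
proof (rule rr_one[OF r rho], rule notI)
  assume rr: "r * \<rho> < 1"
  define c where "c = \<rho> * r powr ((\<rho>-1)/\<rho>)"
  have c: "c > 0" using rho r unfolding c_def by (intro mult_pos_pos) auto
  have v0: "v 0 = 0" and vnn: "\<And>y. y \<in> orthant \<Longrightarrow> v y \<ge> 0" using val by (auto simp: valuation_def)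
  have B: "qd q x = 0" using ray_dem[OF hom v0 vnn[OF x] rho(1) r(1) x q D[unfolded Dc_def]] V by simp
  obtain y where y: "y \<in> orthant" "v y > 0" using val_pos[OF val] by blast
  have b: "qd q y \<ge> 0" using qd_nonneg[OF q y(1)] .
  have e: "1/\<rho> - r > 0" using rr rho by (simp add: field_simps)
  show False
  proof (rule no_small[of "v y" "c * qd q y powr (1/\<rho>)" "1/\<rho> - r"])
    show "0 < v y" using y by simp
    show "0 \<le> c * qd q y powr (1/\<rho>)" using c by simp
    show "0 < 1/\<rho> - r" using e .
    fix l :: real assume l: "l > 0"
    have "v (l *\<^sub>R y) - c * qd q (l *\<^sub>R y) powr (1/\<rho>) \<le> v x - c * qd q x powr (1/\<rho>)"
      using D orthant_scale[of l y] l y unfolding Dc_def c_def by auto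
    moreover have "v (l *\<^sub>R y) = l powr r * v y"
      using hom_val[OF hom, of l y] l y by simp
    moreover have "qd q (l *\<^sub>R y) powr (1/\<rho>) = l powr (1/\<rho>) * qd q y powr (1/\<rho>)"
      using l b by (simp add: qd_scale powr_mult)
    ultimately have "l powr r * v y \<le> l powr (1/\<rho>) * (c * qd q y powr (1/\<rho>))"
      using V B rho by (simp add: mult_ac)
    moreover have "l powr (1/\<rho>) = l powr r * l powr (1/\<rho> - r)" using l by (simp flip: powr_add)
    ultimately have "l powr r * v y \<le> l powr r * (l powr (1/\<rho> - r) * (c * qd q y powr (1/\<rho>)))"
      by (metis mult.assoc)
    then show "v y \<le> l powr (1/\<rho> - r) * (c * qd q y powr (1/\<rho>))" using l
      by (simp add: mult_le_cancel_left_pos)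
  qed
qed

lemma scale_to:
  fixes V a r :: real
  assumes "V > 0" "a > 0" "r > 0"
  shows "(V/a) powr (1/r) > 0" "((V/a) powr (1/r)) powr r * a = V"
    "(V/a) powr (1/r) * (a/V) powr (1/r) = 1"
proof -
  show "(V/a) powr (1/r) > 0" using assms by simp
  show "((V/a) powr (1/r)) powr r * a = V" using assms by (simp add: powr_powr)
  have "(V/a) powr (1/r) * (a/V) powr (1/r) = ((V/a) * (a/V)) powr (1/r)"
    by (rule powr_mult[symmetric])
  moreover have "(V/a) * (a/V) = 1" using assms by simp
  ultimately show "(V/a) powr (1/r) * (a/V) powr (1/r) = 1" by simp
qed

definition Cc :: "real \<Rightarrow> real^'m::finite \<Rightarrow> (real^'m \<Rightarrow> real) \<Rightarrow> real^'m \<Rightarrow> bool" where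
  "Cc r q v x \<longleftrightarrow> (\<forall>y\<in>orthant. v y > 0 \<longrightarrow> qd q x * (v y / v x) powr (1/r) \<le> qd q y)"

lemma C_of_scaled:
  assumes hom: "homogeneous r v" and r: "r > 0" and V: "v x > 0" and q: "q \<in> orthant"
    and H: "\<And>y. y \<in> orthant \<Longrightarrow> v y = v x \<Longrightarrow> qd q x \<le> qd q y"
  shows "Cc r q v x"
  unfolding Cc_def
proof (intro ballI impI)
  fix y assume y: "y \<in> orthant" "v y > 0"
  define \<mu> where "\<mu> = (v x / v y) powr (1/r)"
  note sc = scale_to[OF V y(2) r, folded \<mu>_def]
  have "v (\<mu> *\<^sub>R y) = v x" using hom_val[OF hom, of \<mu> y] sc y by simp
  then have "qd q x \<le> \<mu> * qd q y" using H[of "\<mu> *\<^sub>R y"] orthant_scale[of \<mu> y] sc y by (simp add: qd_scale)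
  then have "qd q x * (v y / v x) powr (1/r) \<le> \<mu> * qd q y * (v y / v x) powr (1/r)"
    by (rule mult_right_mono) simp
  also have "\<dots> = qd q y" using sc(3) by (simp add: mult_ac)
  finally show "qd q x * (v y / v x) powr (1/r) \<le> qd q y" .
qed

lemma D_to_C:
  assumes hom: "homogeneous r v" and r: "r > 0" and rho: "\<rho> > 0" and V: "v x > 0" and q: "q \<in> orthant"
    and x: "x \<in> orthant" and D: "Dc r \<rho> q v x"
  shows "Cc r q v x"
proof (rule C_of_scaled[OF hom r V q])
  fix y assume y: "y \<in> orthant" "v y = v x"
  define c where "c = \<rho> * r powr ((\<rho>-1)/\<rho>)"
  have c: "c > 0" using rho r unfolding c_def by (intro mult_pos_pos) auto
  have "v y - c * qd q y powr (1/\<rho>) \<le> v x - c * qd q x powr (1/\<rho>)"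
    using D y unfolding Dc_def c_def by blast
  then have "qd q x powr (1/\<rho>) \<le> qd q y powr (1/\<rho>)" using y c by simp
  then show "qd q x \<le> qd q y"
    using qd_nonneg[OF q x] qd_nonneg[OF q y(1)] rho
    by (meson not_le powr_less_mono2 zero_less_divide_1_iff)
qed

lemma L_to_C:
  assumes hom: "homogeneous r v" and r: "r > 0" and rho: "\<rho> > 0" and V: "v x > 0" and q: "q \<in> orthant"
    and L: "Lc \<rho> q v x"
  shows "Cc r q v x"
proof (rule C_of_scaled[OF hom r V q])
  fix y assume y: "y \<in> orthant" "v y = v x"
  show "qd q x \<le> qd q y" using L y unfolding Lc_def by force
qed

lemma C_to_D:
  fixes v :: "real^'m::finite \<Rightarrow> real"
  assumes hom: "homogeneous r v" and r: "r > 0" "r \<le> 1" and rho: "\<rho> > 0" "\<rho> \<le> 1" and V: "v x > 0"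
    and q: "q \<in> orthant" and vnn: "\<And>y. y \<in> orthant \<Longrightarrow> v y \<ge> 0"
    and B: "qd q x = r * v x powr \<rho>" and C: "Cc r q v x"
  shows "Dc r \<rho> q v x"
  unfolding Dc_def
proof
  fix y :: "real^'m" assume y: "y \<in> orthant"
  define c where "c = \<rho> * r powr ((\<rho>-1)/\<rho>)"
  have c: "c > 0" using rho r unfolding c_def by (intro mult_pos_pos) auto
  have cB: "c * qd q x powr (1/\<rho>) = \<rho> * r * v x"
    unfolding B c_def by (rule price_key_dir) (use V r rho in auto)
  have rr: "\<rho> * r \<le> 1" using r rho by (simp add: mult_le_one)
  have rhs: "v x - c * qd q x powr (1/\<rho>) = v x * (1 - \<rho> * r)" using cB by (simp add: algebra_simps)
  show "v y - \<rho> * r powr ((\<rho>-1)/\<rho>) * qd q y powr (1/\<rho>) \<le> v x - \<rho> * r powr ((\<rho>-1)/\<rho>) * qd q x powr (1/\<rho>)"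
    unfolding c_def[symmetric] rhs
  proof (cases "v y > 0")
    case False
    then have "v y = 0" using vnn[OF y] by simp
    moreover have "0 \<le> v x * (1 - \<rho> * r)" using V rr by simp
    moreover have "0 \<le> c * qd q y powr (1/\<rho>)" using c by simp
    ultimately show "v y - c * qd q y powr (1/\<rho>) \<le> v x * (1 - \<rho> * r)" by linarith
  next
    case True
    define t where "t = v y / v x"
    have t: "t > 0" using True V by (simp add: t_def)
    define k where "k = 1 / (\<rho> * r)"
    have k: "k \<ge> 1" using rr r rho by (simp add: k_def field_simps)
    have b: "qd q x * t powr (1/r) \<le> qd q y" using C y True unfolding Cc_def t_def by blast
    have "(qd q x * t powr (1/r)) powr (1/\<rho>) \<le> qd q y powr (1/\<rho>)"
      by (rule powr_mono2) (use b rho qd_nonneg[OF q] V t B r in auto)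
    moreover have "(qd q x * t powr (1/r)) powr (1/\<rho>) = qd q x powr (1/\<rho>) * t powr k"
      using t qd_nonneg[OF q] V B by (simp add: powr_mult powr_powr k_def mult.commute)
    ultimately have "c * (qd q x powr (1/\<rho>) * t powr k) \<le> c * qd q y powr (1/\<rho>)"
      using c by simp
    moreover have "c * (qd q x powr (1/\<rho>) * t powr k) = \<rho> * r * v x * t powr k"
      by (metis cB mult.assoc)
    ultimately have "\<rho> * r * v x * t powr k \<le> c * qd q y powr (1/\<rho>)" by simp
    moreover have "t - t powr k / k \<le> 1 - 1/k" using bern[OF _ k] t by simp
    then have "v x * (t - t powr k / k) \<le> v x * (1 - 1/k)" using V by (simp add: mult_left_mono)
    moreover have "v y = v x * t" using V by (simp add: t_def)
    moreover have "v x * t powr k / k = \<rho> * r * v x * t powr k" by (simp add: k_def)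
    moreover have "v x * (1 - 1 / k) = v x * (1 - \<rho> * r)" by (simp add: k_def)
    ultimately show "v y - c * qd q y powr (1/\<rho>) \<le> v x * (1 - \<rho> * r)"
      by (simp add: algebra_simps)
  qed
qed

lemma C_to_L:
  fixes v :: "real^'m::finite \<Rightarrow> real"
  assumes hom: "homogeneous r v" and r: "r > 0" "r \<le> 1" and rho: "\<rho> > 0" "\<rho> \<le> 1" and V: "v x > 0"
    and q: "q \<in> orthant" and vnn: "\<And>y. y \<in> orthant \<Longrightarrow> v y \<ge> 0"
    and B: "qd q x = r * v x powr \<rho>" and C: "Cc r q v x"
  shows "Lc \<rho> q v x"
  unfolding Lc_def
proof
  fix y :: "real^'m" assume y: "y \<in> orthant"
  have rr: "\<rho> * r \<le> 1" using r rho by (simp add: mult_le_one)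
  have rhs: "(1/\<rho>) * v x powr \<rho> - qd q x = (1/\<rho>) * v x powr \<rho> * (1 - \<rho> * r)"
    using B rho by (simp add: field_simps)
  show "(1/\<rho>) * v y powr \<rho> - qd q y \<le> (1/\<rho>) * v x powr \<rho> - qd q x"
    unfolding rhs
  proof (cases "v y > 0")
    case False
    then have "v y = 0" using vnn[OF y] by simp
    moreover have "0 \<le> (1/\<rho>) * v x powr \<rho> * (1 - \<rho> * r)" using V rr rho by simp
    moreover have "0 \<le> qd q y" using qd_nonneg[OF q y] .
    ultimately show "(1/\<rho>) * v y powr \<rho> - qd q y \<le> (1/\<rho>) * v x powr \<rho> * (1 - \<rho> * r)" by simp
  next
    case True
    define t where "t = v y / v x"
    have t: "t > 0" using True V by (simp add: t_def)
    define k where "k = 1 / (\<rho> * r)"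
    have k: "k \<ge> 1" using rr r rho by (simp add: k_def field_simps)
    define u where "u = t powr \<rho>"
    have u: "u \<ge> 0" by (simp add: u_def)
    have b: "qd q x * t powr (1/r) \<le> qd q y" using C y True unfolding Cc_def t_def by blast
    have "t powr (1/r) = u powr k" using t r rho by (simp add: u_def k_def powr_powr)
    then have b2: "r * v x powr \<rho> * u powr k \<le> qd q y" using b B by simp
    have a: "v y powr \<rho> = v x powr \<rho> * u"
    proof -
      have "v y = v x * t" using V by (simp add: t_def)
      then show ?thesis using V t by (simp add: u_def powr_mult)
    qed
    have "u - u powr k / k \<le> 1 - 1/k" using bern[OF u k] .
    then have "(1/\<rho>) * v x powr \<rho> * (u - u powr k / k) \<le> (1/\<rho>) * v x powr \<rho> * (1 - 1/k)"
      by (rule mult_left_mono) (use rho in simp)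
    moreover have "(1/\<rho>) * v x powr \<rho> * (u - u powr k / k) = (1/\<rho>) * v x powr \<rho> * u - r * v x powr \<rho> * u powr k"
      using rho r by (simp add: k_def field_simps)
    moreover have "1/k = \<rho> * r" by (simp add: k_def)
    ultimately show "(1/\<rho>) * v y powr \<rho> - qd q y \<le> (1/\<rho>) * v x powr \<rho> * (1 - \<rho> * r)"
      using a b2 rho by (simp add: algebra_simps)
  qed
qed

lemma D_eq_L_one:
  assumes q: "q \<in> orthant" and x: "x \<in> orthant" and vnn: "\<And>y. y \<in> orthant \<Longrightarrow> v y \<ge> 0"
  shows "Dc 1 1 q v x \<longleftrightarrow> Lc 1 q v x"
  unfolding Dc_def Lc_def using qd_nonneg[OF q] vnn x by auto

lemma D_iff_L:
  fixes v :: "real^'m::finite \<Rightarrow> real"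
  assumes val: "valuation v" and hom: "homogeneous r v"
    and r: "0 < r" "r \<le> 1" and rho: "0 < \<rho>" "\<rho> \<le> 1" and x: "x \<in> orthant" and q: "q \<in> orthant"
  shows "Dc r \<rho> q v x \<longleftrightarrow> Lc \<rho> q v x"
proof -
  have v0: "v 0 = 0" and vnn: "\<And>y. y \<in> orthant \<Longrightarrow> v y \<ge> 0" using val by (auto simp: valuation_def)
  show ?thesis
  proof (cases "v x = 0")
    case True
    show ?thesis
    proof
      assume D: "Dc r \<rho> q v x"
      then have "r = 1 \<and> \<rho> = 1" using V0_D[OF val hom r rho x q D True] by simp
      then show "Lc \<rho> q v x" using D D_eq_L_one[OF q x vnn] by simp
    next
      assume L: "Lc \<rho> q v x"
      then have "r = 1 \<and> \<rho> = 1" using V0_L[OF val hom r rho x q L True] by simp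
      then show "Dc r \<rho> q v x" using L D_eq_L_one[OF q x vnn] by simp
    qed
  next
    case False
    then have V: "v x > 0" using vnn[OF x] by simp
    show ?thesis
    proof
      assume D: "Dc r \<rho> q v x"
      have B: "qd q x = r * v x powr \<rho>"
        using ray_dem[OF hom v0 vnn[OF x] rho(1) r(1) x q D[unfolded Dc_def]] .
      show "Lc \<rho> q v x" using C_to_L[OF hom r rho V q vnn B D_to_C[OF hom r(1) rho(1) V q x D]] .
    next
      assume L: "Lc \<rho> q v x"
      have B: "qd q x = r * v x powr \<rho>"
        using ray_L[OF hom v0 vnn[OF x] rho(1) x q L[unfolded Lc_def]] .
      show "Dc r \<rho> q v x" using C_to_D[OF hom r rho V q vnn B L_to_C[OF hom r(1) rho(1) V q L]] .
    qed
  qed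
qed

lemma powr_concave_pos:
  fixes \<rho> :: real
  assumes "0 < \<rho>" "\<rho> \<le> 1"
  shows "concave_on {0<..} (\<lambda>x. x powr \<rho>)"
proof (rule f''_le0_imp_concave[where f'="\<lambda>x. \<rho> * x powr (\<rho> - 1)" and f''="\<lambda>x. \<rho> * ((\<rho> - 1) * x powr (\<rho> - 1 - 1))"])
  show "convex {0::real<..}" by simp
  fix x :: real assume x: "x \<in> {0<..}"
  then show "((\<lambda>x. x powr \<rho>) has_real_derivative \<rho> * x powr (\<rho> - 1)) (at x)"
    by (intro has_real_derivative_powr) auto
  show "((\<lambda>x. \<rho> * x powr (\<rho> - 1)) has_real_derivative \<rho> * ((\<rho> - 1) * x powr (\<rho> - 1 - 1))) (at x)"
    using x by (intro DERIV_cmult has_real_derivative_powr) auto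
  show "\<rho> * ((\<rho> - 1) * x powr (\<rho> - 1 - 1)) \<le> 0"
    using assms x by (intro mult_nonneg_nonpos mult_nonpos_nonneg) auto
qed

lemma le_powr_small: "0 \<le> (x::real) \<Longrightarrow> x \<le> 1 \<Longrightarrow> \<rho> \<le> 1 \<Longrightarrow> x \<le> x powr \<rho>"
  using powr_mono'[of \<rho> 1 x] by (cases "x = 0") auto

lemma powr_concave:
  fixes a b \<mu> \<rho> :: real
  assumes ab: "0 \<le> a" "0 \<le> b" and mu: "0 \<le> \<mu>" "\<mu> \<le> 1" and rho: "0 < \<rho>" "\<rho> \<le> 1"
  shows "\<mu> * a powr \<rho> + (1-\<mu>) * b powr \<rho> \<le> (\<mu>*a + (1-\<mu>)*b) powr \<rho>"
proof (cases "a = 0 \<or> b = 0")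
  case True
  then show ?thesis
  proof
    assume a: "a = 0"
    have "(1-\<mu>) * b powr \<rho> \<le> (1-\<mu>) powr \<rho> * b powr \<rho>"
      by (rule mult_right_mono) (use le_powr_small[of "1-\<mu>" \<rho>] mu rho in auto)
    also have "\<dots> = ((1-\<mu>) * b) powr \<rho>" using mu ab by (simp add: powr_mult)
    finally show ?thesis using a rho by simp
  next
    assume b: "b = 0"
    have "\<mu> * a powr \<rho> \<le> \<mu> powr \<rho> * a powr \<rho>"
      by (rule mult_right_mono) (use le_powr_small[of "\<mu>" \<rho>] mu rho in auto)
    also have "\<dots> = (\<mu> * a) powr \<rho>" using mu ab by (simp add: powr_mult)
    finally show ?thesis using b rho by simp
  qed
next
  case False
  then have "a \<in> {0<..}" "b \<in> {0<..}" using ab by auto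
  from concave_onD[OF powr_concave_pos[OF rho], of "1-\<mu>" a b, OF _ _ this(1) this(2)] mu
  show ?thesis by (simp add: algebra_simps)
qed

lemma vrho_concave:
  fixes v :: "real^'m::finite \<Rightarrow> real"
  assumes conc: "concave_on orthant v" and vnn: "\<And>y. y \<in> orthant \<Longrightarrow> v y \<ge> 0"
    and a: "a \<in> orthant" and b: "b \<in> orthant" and mu: "0 \<le> \<mu>" "\<mu> \<le> 1" and rho: "0 < \<rho>" "\<rho> \<le> 1"
  shows "\<mu> * v a powr \<rho> + (1-\<mu>) * v b powr \<rho> \<le> v (\<mu> *\<^sub>R a + (1-\<mu>) *\<^sub>R b) powr \<rho>"
proof -
  have "\<mu> * v a + (1-\<mu>) * v b \<le> v (\<mu> *\<^sub>R a + (1-\<mu>) *\<^sub>R b)"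
    using concave_onD[OF conc, of "1-\<mu>" a b] mu a b by (simp add: algebra_simps)
  moreover have "\<mu> *\<^sub>R a + (1-\<mu>) *\<^sub>R b \<in> orthant" using a b mu by (auto simp: orthant_def)
  ultimately have "(\<mu> * v a + (1-\<mu>) * v b) powr \<rho> \<le> v (\<mu> *\<^sub>R a + (1-\<mu>) *\<^sub>R b) powr \<rho>"
    using vnn a b mu rho by (intro powr_mono2) auto
  then show ?thesis using powr_concave[OF vnn[OF a] vnn[OF b] mu rho] by linarith
qed

lemma qd_inner: "qd q y = inner q y"
  by (simp add: qd_def inner_vec_def)

lemma qd_sum_agents: "(\<Sum>i\<in>UNIV. qd q (x i)) = (\<Sum>j\<in>UNIV. q $ j * (\<Sum>i\<in>UNIV. x i $ j))"
  unfolding qd_def by (simp add: sum_distrib_left) (rule sum.swap)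

lemma qd_axis: "qd q (axis j 1) = q $ j"
  by (simp add: qd_def axis_def if_distrib cong: if_cong)

lemma P_obj_sum: "P_obj v \<rho> x = (\<Sum>i\<in>UNIV. (1/\<rho>) * v i (x i) powr \<rho>)"
  by (simp add: P_obj_def sum_distrib_left)

lemma Psi_iff:
  assumes vnn: "\<And>i y. y \<in> orthant \<Longrightarrow> v i y \<ge> 0" and rho: "0 < \<rho>"
  shows "x \<in> Psi v \<rho> \<longleftrightarrow> P_optimal v \<rho> x"
proof -
  have S: "\<And>x. (\<Sum>i\<in>UNIV. v i (x i) powr \<rho>) \<ge> 0" by (simp add: sum_nonneg)
  have "(\<Sum>i\<in>UNIV. v i (x' i) powr \<rho>) powr (1/\<rho>) \<le> (\<Sum>i\<in>UNIV. v i (x i) powr \<rho>) powr (1/\<rho>)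
        \<longleftrightarrow> (\<Sum>i\<in>UNIV. v i (x' i) powr \<rho>) \<le> (\<Sum>i\<in>UNIV. v i (x i) powr \<rho>)" for x'
  proof
    assume "(\<Sum>i\<in>UNIV. v i (x' i) powr \<rho>) powr (1/\<rho>) \<le> (\<Sum>i\<in>UNIV. v i (x i) powr \<rho>) powr (1/\<rho>)"
    then show "(\<Sum>i\<in>UNIV. v i (x' i) powr \<rho>) \<le> (\<Sum>i\<in>UNIV. v i (x i) powr \<rho>)"
      using S[of x] S[of x'] rho by (meson not_le powr_less_mono2 zero_less_divide_1_iff)
  next
    assume "(\<Sum>i\<in>UNIV. v i (x' i) powr \<rho>) \<le> (\<Sum>i\<in>UNIV. v i (x i) powr \<rho>)"
    then show "(\<Sum>i\<in>UNIV. v i (x' i) powr \<rho>) powr (1/\<rho>) \<le> (\<Sum>i\<in>UNIV. v i (x i) powr \<rho>) powr (1/\<rho>)"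
      using S[of x'] rho by (intro powr_mono2) auto
  qed
  moreover have "P_obj v \<rho> x' \<le> P_obj v \<rho> x \<longleftrightarrow>
     (\<Sum>i\<in>UNIV. v i (x' i) powr \<rho>) \<le> (\<Sum>i\<in>UNIV. v i (x i) powr \<rho>)" for x'
    using rho by (simp add: P_obj_def divide_le_cancel)
  ultimately show ?thesis by (simp add: Psi_def P_optimal_def ces_welfare_def)
qed

lemma L_opt:
  fixes v :: "'a::finite \<Rightarrow> real^'m::finite \<Rightarrow> real" and x :: "'a \<Rightarrow> real^'m"
  assumes alloc: "allocation x" and q: "q \<in> orthant" and L: "\<And>i. Lc \<rho> q (v i) (x i)"
    and cl: "\<And>j. q $ j > 0 \<Longrightarrow> (\<Sum>i\<in>UNIV. x i $ j) = 1"
  shows "P_optimal v \<rho> x"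
  unfolding P_optimal_def
proof (intro conjI allI impI)
  show "allocation x" by fact
  fix x' :: "'a \<Rightarrow> real^'m" assume a': "allocation x'"
  have each: "(1/\<rho>) * v i (x' i) powr \<rho> \<le> (1/\<rho>) * v i (x i) powr \<rho> - qd q (x i) + qd q (x' i)" for i
  proof -
    have "x' i \<in> orthant" using a' unfolding allocation_def by blast
    then show ?thesis using L[of i] unfolding Lc_def by fastforce
  qed
  have "P_obj v \<rho> x' \<le> (\<Sum>i\<in>UNIV. (1/\<rho>) * v i (x i) powr \<rho> - qd q (x i) + qd q (x' i))"
    unfolding P_obj_sum by (rule sum_mono) (rule each)
  also have "\<dots> = P_obj v \<rho> x - (\<Sum>i\<in>UNIV. qd q (x i)) + (\<Sum>i\<in>UNIV. qd q (x' i))"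
    by (simp add: P_obj_sum sum.distrib sum_subtractf)
  also have "(\<Sum>i\<in>UNIV. qd q (x i)) = (\<Sum>j\<in>UNIV. q $ j)"
    unfolding qd_sum_agents
  proof (rule sum.cong[OF refl])
    fix j
    show "q $ j * (\<Sum>i\<in>UNIV. x i $ j) = q $ j"
      using cl[of j] q by (cases "q $ j > 0") (auto simp: orthant_def not_less order.antisym)
  qed
  also have "(\<Sum>i\<in>UNIV. qd q (x' i)) \<le> (\<Sum>j\<in>UNIV. q $ j)"
    unfolding qd_sum_agents
  proof (rule sum_mono)
    fix j
    show "q $ j * (\<Sum>i\<in>UNIV. x' i $ j) \<le> q $ j"
      using a' q by (intro mult_right_le_one_le) (auto simp: allocation_def orthant_def intro: sum_nonneg)
  qed
  finally show "P_obj v \<rho> x' \<le> P_obj v \<rho> x" by simp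
qed

lemma WE_to_L:
  fixes v :: "'a::finite \<Rightarrow> real^'m::finite \<Rightarrow> real" and x :: "'a \<Rightarrow> real^'m"
  assumes val: "\<And>i. valuation (v i)" and hom: "\<And>i. homogeneous r (v i)"
    and r: "0 < r" "r \<le> 1" and rho: "0 < \<rho>" "\<rho> \<le> 1" and q: "q \<in> orthant"
    and we: "walrasian_eq v x (ces_price r \<rho> q)"
  shows "Lc \<rho> q (v i) (x i)"
proof -
  have "x i \<in> orthant" "Dc r \<rho> q (v i) (x i)" using we demand_Dc unfolding walrasian_eq_def by blast+
  then show ?thesis using D_iff_L[OF val hom r rho _ q] by blast
qed

lemma WE_clear:
  fixes v :: "'a::finite \<Rightarrow> real^'m::finite \<Rightarrow> real" and x :: "'a \<Rightarrow> real^'m"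
  assumes r: "0 < r" and rho: "0 < \<rho>" and we: "walrasian_eq v x (ces_price r \<rho> q)" and qj: "q $ j > 0"
  shows "(\<Sum>i\<in>UNIV. x i $ j) = 1"
proof -
  have "nonzero_cost (ces_price r \<rho> q) j"
    unfolding nonzero_cost_def
  proof (intro bexI conjI allI impI)
    show "axis j 1 \<in> orthant" by (simp add: orthant_def axis_def)
    fix l assume "l \<noteq> j" then show "axis j 1 $ l = (0::real)" by (simp add: axis_def)
  next
    show "ces_price r \<rho> q (axis j 1) > 0"
      unfolding price_eq qd_axis using r rho qj by (intro mult_pos_pos) auto
  qed
  then show ?thesis using we unfolding walrasian_eq_def by blast
qed

lemma WE_opt:
  fixes v :: "'a::finite \<Rightarrow> real^'m::finite \<Rightarrow> real" and x :: "'a \<Rightarrow> real^'m"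
  assumes val: "\<And>i. valuation (v i)" and hom: "\<And>i. homogeneous r (v i)"
    and r: "0 < r" "r \<le> 1" and rho: "0 < \<rho>" "\<rho> \<le> 1" and q: "q \<in> orthant"
    and alloc: "allocation x" and we: "walrasian_eq v x (ces_price r \<rho> q)"
  shows "P_optimal v \<rho> x"
  by (rule L_opt[OF alloc q WE_to_L[OF val hom r rho q we] WE_clear[OF r(1) rho(1) we]])

lemma qd_single:
  assumes "\<forall>l. l \<noteq> j \<longrightarrow> y $ l = 0"
  shows "qd q y = q $ j * y $ j"
proof -
  have "qd q y = (\<Sum>l\<in>UNIV. if l = j then q $ j * y $ j else 0)"
    unfolding qd_def by (rule sum.cong) (use assms in auto)
  then show ?thesis by simp
qed

lemma L_to_WE:
  fixes v :: "'a::finite \<Rightarrow> real^'m::finite \<Rightarrow> real" and x :: "'a \<Rightarrow> real^'m"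
  assumes val: "\<And>i. valuation (v i)" and hom: "\<And>i. homogeneous r (v i)"
    and r: "0 < r" "r \<le> 1" and rho: "0 < \<rho>" "\<rho> \<le> 1" and q: "q \<in> orthant"
    and alloc: "allocation x" and L: "\<And>i. Lc \<rho> q (v i) (x i)"
    and slack: "\<And>j. (\<Sum>i\<in>UNIV. x i $ j) < 1 \<Longrightarrow> q $ j = 0"
  shows "walrasian_eq v x (ces_price r \<rho> q)"
  unfolding walrasian_eq_def
proof (intro conjI allI impI)
  fix i
  have xi: "x i \<in> orthant" using alloc unfolding allocation_def by blast
  then show "x i \<in> demand (v i) (ces_price r \<rho> q)"
    using D_iff_L[OF val hom r rho xi q] L[of i] demand_Dc by blast
next
  fix j show "(\<Sum>i\<in>UNIV. x i $ j) \<le> 1" using alloc unfolding allocation_def by blast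
next
  fix j assume "nonzero_cost (ces_price r \<rho> q) j"
  then obtain y where y: "y \<in> orthant" "\<forall>l. l \<noteq> j \<longrightarrow> y $ l = 0" "ces_price r \<rho> q y > 0"
    unfolding nonzero_cost_def by blast
  have "q $ j \<noteq> 0"
  proof
    assume "q $ j = 0"
    then have "qd q y = 0" using qd_single[OF y(2)] by simp
    then show False using y(3) unfolding price_eq by simp
  qed
  then have "\<not> (\<Sum>i\<in>UNIV. x i $ j) < 1" using slack by blast
  moreover have "(\<Sum>i\<in>UNIV. x i $ j) \<le> 1" using alloc unfolding allocation_def by blast
  ultimately show "(\<Sum>i\<in>UNIV. x i $ j) = 1" by simp
qed

lemma sum_upd:
  fixes f :: "'a::finite \<Rightarrow> 'b::ab_group_add"
  shows "sum (f(i:=a)) UNIV = sum f UNIV - f i + a"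
proof -
  have "sum (f(i:=a)) UNIV = (f(i:=a)) i + sum (f(i:=a)) (UNIV - {i})" by (rule sum.remove) auto
  also have "(f(i:=a)) i = a" by simp
  also have "sum (f(i:=a)) (UNIV - {i}) = sum f (UNIV - {i})" by (rule sum.cong) auto
  also have "sum f (UNIV - {i}) = sum f UNIV - f i" using sum.remove[of UNIV i f] by (simp add: algebra_simps)
  finally show ?thesis by (simp add: algebra_simps)
qed

lemma lin_bound:
  fixes k M :: real
  assumes "\<And>s. s \<ge> 0 \<Longrightarrow> s * k \<le> M"
  shows "k \<le> 0"
proof (rule ccontr)
  assume "\<not> k \<le> 0"
  then have k: "k > 0" by simp
  have "(\<bar>M\<bar> + 1) / k * k \<le> M" by (rule assms) (use k in simp)
  then show False using k by simp
qed

lemma small_delta: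
  fixes M K L :: real
  assumes H: "\<And>\<delta>. 0 < \<delta> \<Longrightarrow> \<delta> < 1 \<Longrightarrow> M \<le> K + \<delta> * L" and L: "L \<ge> 0"
  shows "M \<le> K"
proof (rule ccontr)
  assume "\<not> M \<le> K"
  then have g: "M - K > 0" by simp
  define \<delta> where "\<delta> = min (1/2) ((M - K) / (2 * (L + 1)))"
  have d: "0 < \<delta>" "\<delta> < 1" using g L by (auto simp: \<delta>_def)
  have "\<delta> * L \<le> (M - K) / (2 * (L + 1)) * L"
    using L by (intro mult_right_mono) (auto simp: \<delta>_def)
  also have "\<dots> < M - K"
  proof -
    have "(M - K) / (2 * (L + 1)) * L = (M - K) * (L / (2 * (L + 1)))" by simp
    also have "\<dots> < (M - K) * 1"
      using g L by (intro mult_strict_left_mono) (auto simp: field_simps)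
    finally show ?thesis by simp
  qed
  finally show False using H[OF d] by simp
qed

lemma exists_q:
  fixes v :: "'a::finite \<Rightarrow> real^'m::finite \<Rightarrow> real" and x :: "'a \<Rightarrow> real^'m"
  assumes conc: "\<And>i. concave_on orthant (v i)" and vnn: "\<And>i y. y \<in> orthant \<Longrightarrow> v i y \<ge> 0"
    and v0: "\<And>i. v i 0 = 0" and rho: "0 < \<rho>" "\<rho> \<le> 1" and opt: "P_optimal v \<rho> x"
  shows "\<exists>q\<in>orthant. (\<forall>i. Lc \<rho> q (v i) (x i)) \<and> (\<forall>j. (\<Sum>i\<in>UNIV. x i $ j) < 1 \<longrightarrow> q $ j = 0)"
proof -
  define G where "G y = (\<Sum>i\<in>UNIV. (1/\<rho>) * v i (y i) powr \<rho>)" for y :: "'a \<Rightarrow> real^'m"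
  define Fs where "Fs = G x"
  have alloc: "allocation x" using opt unfolding P_optimal_def by blast
  have xo: "\<And>i. x i \<in> orthant" using alloc unfolding allocation_def by blast
  have Gopt: "\<And>y. allocation y \<Longrightarrow> G y \<le> Fs"
    using opt unfolding P_optimal_def Fs_def G_def P_obj_sum by blast
  define A where "A = {w :: (real^'m) \<times> real. \<exists>y. (\<forall>i. y i \<in> orthant) \<and>
      (\<forall>j. (\<Sum>i\<in>UNIV. y i $ j) \<le> fst w $ j) \<and> snd w \<le> G y}"
  define B where "B = {w :: (real^'m) \<times> real. (\<forall>j. fst w $ j < 1) \<and> snd w > Fs}"
  define zx where "zx = sum x UNIV"
  have zx: "\<And>j. zx $ j = (\<Sum>i\<in>UNIV. x i $ j)" by (simp add: zx_def)
  have inA: "(z, t) \<in> A" if "\<And>i. y i \<in> orthant" "\<And>j. (\<Sum>i\<in>UNIV. y i $ j) \<le> z $ j" "t \<le> G y" for y z t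
    using that unfolding A_def by auto
  have convA: "convex A"
    unfolding convex_def
  proof (intro ballI allI impI)
    fix w1 w2 :: "(real^'m) \<times> real" and u1 u2 :: real
    assume w: "w1 \<in> A" "w2 \<in> A" and u: "0 \<le> u1" "0 \<le> u2" "u1 + u2 = 1"
    obtain y1 where y1: "\<forall>i. y1 i \<in> orthant" "\<forall>j. (\<Sum>i\<in>UNIV. y1 i $ j) \<le> fst w1 $ j" "snd w1 \<le> G y1"
      using w(1) unfolding A_def by blast
    obtain y2 where y2: "\<forall>i. y2 i \<in> orthant" "\<forall>j. (\<Sum>i\<in>UNIV. y2 i $ j) \<le> fst w2 $ j" "snd w2 \<le> G y2"
      using w(2) unfolding A_def by blast
    define y where "y i = u1 *\<^sub>R y1 i + u2 *\<^sub>R y2 i" for i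
    have yo: "y i \<in> orthant" for i using y1(1) y2(1) u unfolding y_def orthant_def by auto
    have ys: "(\<Sum>i\<in>UNIV. y i $ j) \<le> fst (u1 *\<^sub>R w1 + u2 *\<^sub>R w2) $ j" for j
    proof -
      have "(\<Sum>i\<in>UNIV. y i $ j) = u1 * (\<Sum>i\<in>UNIV. y1 i $ j) + u2 * (\<Sum>i\<in>UNIV. y2 i $ j)"
        by (simp add: y_def sum.distrib sum_distrib_left)
      also have "\<dots> \<le> u1 * fst w1 $ j + u2 * fst w2 $ j"
        using y1(2) y2(2) u by (intro add_mono mult_left_mono) auto
      finally show ?thesis by simp
    qed
    have "u1 * G y1 + u2 * G y2 \<le> G y"
    proof -
      have "u1 * G y1 + u2 * G y2 = (\<Sum>i\<in>UNIV. (1/\<rho>) * (u1 * v i (y1 i) powr \<rho> + (1 - u1) * v i (y2 i) powr \<rho>))"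
      proof -
        have u2: "u2 = 1 - u1" using u by simp
        show ?thesis unfolding G_def sum_distrib_left u2 sum.distrib[symmetric]
          by (rule sum.cong) (use rho in \<open>auto simp: field_simps\<close>)
      qed
      also have "\<dots> \<le> G y"
        unfolding G_def
      proof (rule sum_mono)
        fix i
        have "u1 * v i (y1 i) powr \<rho> + (1 - u1) * v i (y2 i) powr \<rho> \<le> v i (u1 *\<^sub>R y1 i + (1 - u1) *\<^sub>R y2 i) powr \<rho>"
          using vrho_concave[OF conc vnn y1(1)[rule_format, of i] y2(1)[rule_format, of i] _ _ rho, of u1] u by auto
        moreover have "1 - u1 = u2" using u by simp
        ultimately show "(1/\<rho>) * (u1 * v i (y1 i) powr \<rho> + (1 - u1) * v i (y2 i) powr \<rho>) \<le> (1/\<rho>) * v i (y i) powr \<rho>"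
          using rho by (simp add: y_def divide_right_mono)
      qed
      finally show ?thesis .
    qed
    moreover have "snd (u1 *\<^sub>R w1 + u2 *\<^sub>R w2) \<le> u1 * G y1 + u2 * G y2"
      using y1(3) y2(3) u by (simp add: add_mono mult_left_mono)
    ultimately show "u1 *\<^sub>R w1 + u2 *\<^sub>R w2 \<in> A"
      unfolding A_def using yo ys by (intro CollectI exI[of _ y]) auto
  qed
  have convB: "convex B"
    unfolding convex_def
  proof (intro ballI allI impI)
    fix w1 w2 :: "(real^'m) \<times> real" and u1 u2 :: real
    assume w: "w1 \<in> B" "w2 \<in> B" and u: "0 \<le> u1" "0 \<le> u2" "u1 + u2 = 1"
    have "fst (u1 *\<^sub>R w1 + u2 *\<^sub>R w2) $ j < 1" for j
    proof -
      have "u1 * fst w1 $ j + u2 * fst w2 $ j < 1"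
      proof (cases "u1 = 0")
        case True then show ?thesis using w u unfolding B_def by auto
      next
        case False
        then have "u1 * fst w1 $ j < u1 * 1" using w u unfolding B_def by (intro mult_strict_left_mono) auto
        moreover have "u2 * fst w2 $ j \<le> u2 * 1" using w u unfolding B_def
          by (intro mult_left_mono) (auto simp: less_imp_le)
        ultimately show ?thesis using u by simp
      qed
      then show ?thesis by simp
    qed
    moreover have "snd (u1 *\<^sub>R w1 + u2 *\<^sub>R w2) > Fs"
    proof -
      have "u1 * snd w1 + u2 * snd w2 > u1 * Fs + u2 * Fs"
      proof (cases "u1 = 0")
        case True then show ?thesis using w u unfolding B_def by auto
      next
        case False
        then have "u1 * snd w1 > u1 * Fs" using w u unfolding B_def by (intro mult_strict_left_mono) auto
        moreover have "u2 * snd w2 \<ge> u2 * Fs" using w u unfolding B_def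
          by (intro mult_left_mono) (auto simp: less_imp_le)
        ultimately show ?thesis by simp
      qed
      moreover have "u1 * Fs + u2 * Fs = Fs" using u by (metis distrib_right mult_1)
      ultimately show ?thesis by simp
    qed
    ultimately show "u1 *\<^sub>R w1 + u2 *\<^sub>R w2 \<in> B" unfolding B_def by auto
  qed
  have xA: "(zx, Fs) \<in> A" by (rule inA[of x]) (auto simp: xo zx Fs_def)
  have oneB: "(0, Fs + 1) \<in> B" unfolding B_def by simp
  have disj: "A \<inter> B = {}"
  proof (rule ccontr)
    assume "A \<inter> B \<noteq> {}"
    then obtain w where w: "w \<in> A" "w \<in> B" by blast
    then obtain y where y: "\<forall>i. y i \<in> orthant" "\<forall>j. (\<Sum>i\<in>UNIV. y i $ j) \<le> fst w $ j" "snd w \<le> G y"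
      unfolding A_def by blast
    have "allocation y" unfolding allocation_def
    proof (intro conjI allI)
      fix i show "y i \<in> orthant" using y(1) by blast
    next
      fix j have "fst w $ j < 1" using w(2) unfolding B_def by blast
      then show "(\<Sum>i\<in>UNIV. y i $ j) \<le> 1" using y(2)[rule_format, of j] by linarith
    qed
    then have "G y \<le> Fs" by (rule Gopt)
    then show False using y(3) w(2) unfolding B_def by simp
  qed
  obtain a b where ab: "a \<noteq> 0" "\<forall>w\<in>A. inner a w \<le> b" "\<forall>w\<in>B. inner a w \<ge> b"
    using separating_hyperplane_sets[OF convA convB _ _ disj] xA oneB by blast
  obtain aq \<alpha> where a: "a = (aq, \<alpha>)" by (cases a)
  have HA: "inner aq z + \<alpha> * t \<le> b" if "(z, t) \<in> A" for z t using ab(2) that a by auto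
  have HB: "inner aq z + \<alpha> * t \<ge> b" if "(z, t) \<in> B" for z t using ab(3) that a by auto
  have alpha: "\<alpha> \<ge> 0"
  proof -
    have "s * (-\<alpha>) \<le> b - inner aq zx - \<alpha> * Fs" if s: "s \<ge> 0" for s
    proof -
      have "(zx, Fs - s) \<in> A" by (rule inA[of x]) (use s in \<open>auto simp: xo zx Fs_def\<close>)
      from HA[OF this] show ?thesis by (simp add: algebra_simps)
    qed
    from lin_bound[OF this] show ?thesis by simp
  qed
  have aqj: "aq $ j \<le> 0" for j
  proof -
    have "s * (aq $ j) \<le> b - inner aq zx - \<alpha> * Fs" if s: "s \<ge> 0" for s
    proof -
      have "(zx + s *\<^sub>R axis j 1, Fs) \<in> A"
      proof (rule inA[of x])
        fix l show "(\<Sum>i\<in>UNIV. x i $ l) \<le> (zx + s *\<^sub>R axis j 1) $ l"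
          using s by (simp add: zx axis_def)
      qed (auto simp: xo Fs_def)
      from HA[OF this] show ?thesis by (simp add: inner_add_right algebra_simps inner_axis)
    qed
    from lin_bound[OF this] show ?thesis .
  qed
  have alpha_pos: "\<alpha> > 0"
  proof (rule ccontr)
    assume "\<not> \<alpha> > 0"
    then have a0: "\<alpha> = 0" using alpha by simp
    have "(0, 0) \<in> A" by (rule inA[of "\<lambda>i. 0"]) (auto simp: orthant_zero G_def v0)
    from HA[OF this] have b0: "b \<ge> 0" by simp
    define h :: "real^'m" where "h = (\<chi> j. 1/2)"
    have "(h, Fs + 1) \<in> B" unfolding B_def h_def by simp
    from HB[OF this] b0 a0 have "inner aq h \<ge> 0" by simp
    then have "(\<Sum>j\<in>UNIV. aq $ j * (1/2)) \<ge> 0" by (simp add: inner_vec_def h_def)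
    then have "(\<Sum>j\<in>UNIV. - aq $ j * (1/2)) \<le> 0" by (simp add: sum_negf)
    moreover have "\<And>j. - aq $ j * (1/2) \<ge> 0" using aqj by simp
    ultimately have "\<And>j. - aq $ j * (1/2) = 0"
      using sum_nonneg_eq_0_iff[of UNIV "\<lambda>j. - aq $ j * (1/2)"] by (simp add: sum_nonneg order.antisym)
    then have "aq = 0" by (simp add: vec_eq_iff)
    then show False using ab(1) a a0 by (simp add: zero_prod_def)
  qed
  define q where "q = (- 1/\<alpha>) *\<^sub>R aq"
  have qo: "q \<in> orthant" using aqj alpha_pos unfolding q_def orthant_def
    by (auto intro: mult_nonpos_nonpos simp: divide_simps)
  have qz: "inner q z = - inner aq z / \<alpha>" for z unfolding q_def by simp
  have KA: "t - inner q z \<le> b / \<alpha>" if "(z, t) \<in> A" for z t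
  proof -
    have "(inner aq z + \<alpha> * t) / \<alpha> \<le> b / \<alpha>" using HA[OF that] alpha_pos by (simp add: divide_right_mono)
    then show ?thesis using alpha_pos by (simp add: qz add_divide_distrib)
  qed
  have KB: "t - inner q z \<ge> b / \<alpha>" if "(z, t) \<in> B" for z t
  proof -
    have "(inner aq z + \<alpha> * t) / \<alpha> \<ge> b / \<alpha>" using HB[OF that] alpha_pos by (simp add: divide_right_mono)
    then show ?thesis using alpha_pos by (simp add: qz add_divide_distrib)
  qed
  define one :: "real^'m" where "one = (\<chi> j. 1)"
  define Q where "Q = inner q one"
  have Q: "Q = (\<Sum>j\<in>UNIV. q $ j)" by (simp add: Q_def one_def inner_vec_def)
  have Qnn: "Q \<ge> 0" using qo unfolding Q orthant_def by (simp add: sum_nonneg)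
  have bQ: "b / \<alpha> \<le> Fs - Q"
  proof (rule small_delta[of _ _ "1 + Q"])
    fix \<delta> :: real assume d: "0 < \<delta>" "\<delta> < 1"
    have "((1 - \<delta>) *\<^sub>R one, Fs + \<delta>) \<in> B" unfolding B_def one_def using d by simp
    from KB[OF this] show "b / \<alpha> \<le> Fs - Q + \<delta> * (1 + Q)" by (simp add: Q_def algebra_simps)
  qed (use Qnn in simp)
  have S: "t - inner q z \<le> Fs - Q" if "(z, t) \<in> A" for z t using KA[OF that] bQ by simp
  have qzx: "(\<Sum>j\<in>UNIV. q $ j * (1 - zx $ j)) = Q - inner q zx"
    by (simp add: Q inner_vec_def algebra_simps sum_subtractf)
  have "Q - inner q zx \<le> 0" using S[OF xA] by simp
  moreover have tnn: "\<And>j. q $ j * (1 - zx $ j) \<ge> 0"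
    using qo alloc unfolding orthant_def allocation_def zx by simp
  moreover have "Q - inner q zx \<ge> 0" unfolding qzx[symmetric] by (rule sum_nonneg) (rule tnn)
  ultimately have s0: "(\<Sum>j\<in>UNIV. q $ j * (1 - zx $ j)) = 0" using qzx by simp
  have slack0: "\<And>j. q $ j * (1 - zx $ j) = 0"
    using sum_nonneg_eq_0_iff[of UNIV "\<lambda>j. q $ j * (1 - zx $ j)"] s0 tnn by simp
  have qzxQ: "inner q zx = Q" using s0 qzx by simp
  show ?thesis
  proof (intro bexI[OF _ qo] conjI allI impI)
    fix j assume "(\<Sum>i\<in>UNIV. x i $ j) < 1"
    then show "q $ j = 0" using slack0[of j] zx[of j] by simp
  next
    fix i
    show "Lc \<rho> q (v i) (x i)" unfolding Lc_def
    proof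
      fix y :: "real^'m" assume y: "y \<in> orthant"
      define y' where "y' = x(i := y)"
      have "(zx - x i + y, G y') \<in> A"
      proof (rule inA[of y'])
        fix k show "y' k \<in> orthant" using xo y by (simp add: y'_def)
      next
        fix j
        have "(\<Sum>k\<in>UNIV. y' k $ j) = (sum y' UNIV) $ j" by simp
        also have "sum y' UNIV = zx - x i + y" unfolding y'_def zx_def by (rule sum_upd)
        finally show "(\<Sum>k\<in>UNIV. y' k $ j) \<le> (zx - x i + y) $ j" by simp
      qed simp
      from S[OF this] have "G y' - (Q - inner q (x i) + inner q y) \<le> Fs - Q"
        by (simp add: inner_add_right inner_diff_right qzxQ)
      moreover have "G y' = Fs - (1/\<rho>) * v i (x i) powr \<rho> + (1/\<rho>) * v i y powr \<rho>"
      proof -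
        have "G y' = sum ((\<lambda>k. (1/\<rho>) * v k (x k) powr \<rho>)(i := (1/\<rho>) * v i y powr \<rho>)) UNIV"
          unfolding G_def y'_def by (rule sum.cong) auto
        then show ?thesis unfolding Fs_def G_def sum_upd by simp
      qed
      ultimately show "(1/\<rho>) * v i y powr \<rho> - qd q y \<le> (1/\<rho>) * v i (x i) powr \<rho> - qd q (x i)"
        by (simp add: qd_inner)
    qed
  qed
qed

lemma deriv_nonpos_right:
  fixes f :: "real \<Rightarrow> real"
  assumes der: "(f has_real_derivative D) (at 0 within {0..})" and le: "\<And>t. t \<ge> 0 \<Longrightarrow> f t \<le> f 0"
  shows "D \<le> 0"
proof -
  have lim: "((\<lambda>y. (f y - f 0) / (y - 0)) \<longlongrightarrow> D) (at_right 0)"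
    using der unfolding has_field_derivative_iff at_within_Ici_at_right .
  have "eventually (\<lambda>y. (f y - f 0) / (y - 0) \<le> 0) (at_right (0::real))"
    using eventually_at_right_less[of "0::real"]
  proof (rule eventually_mono)
    fix y :: real assume "0 < y"
    then show "(f y - f 0) / (y - 0) \<le> 0" using le[of y] by (simp add: divide_nonpos_pos)
  qed
  from tendsto_upperbound[OF lim this] show ?thesis by simp
qed

lemma path_deriv:
  fixes v :: "real^'m::finite \<Rightarrow> real"
  assumes dv: "(v has_derivative D) (at x within orthant)"
    and S: "\<And>t. t \<in> S \<Longrightarrow> x + t *\<^sub>R axis j 1 \<in> orthant"
  shows "((\<lambda>t. v (x + t *\<^sub>R axis j 1)) has_real_derivative D (axis j 1)) (at 0 within S)"
proof -
  have p: "((\<lambda>t. x + t *\<^sub>R axis j 1) has_derivative (\<lambda>t. t *\<^sub>R axis j 1)) (at 0 within S)"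
    by (intro derivative_eq_intros) auto
  have "(v has_derivative D) (at ((\<lambda>t. x + t *\<^sub>R axis j 1) 0) within ((\<lambda>t. x + t *\<^sub>R axis j 1) ` S))"
  proof -
    have "(\<lambda>t. x + t *\<^sub>R axis j 1) ` S \<subseteq> orthant" using S by auto
    then show ?thesis using has_derivative_subset[OF dv] by simp
  qed
  from diff_chain_within[OF p this]
  have c: "((\<lambda>t. v (x + t *\<^sub>R axis j 1)) has_derivative (\<lambda>t. D (t *\<^sub>R axis j 1))) (at 0 within S)"
    by (simp add: comp_def)
  have lin: "linear D" using has_derivative_linear[OF dv] .
  have "(\<lambda>t. D (t *\<^sub>R axis j 1)) = (*) (D (axis j 1))"
    using linear_cmul[OF lin] by (auto simp: fun_eq_iff)
  then show ?thesis using c unfolding has_field_derivative_def by simp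
qed

lemma orthant_path:
  assumes x: "x \<in> orthant" and t: "t \<ge> - (x $ j)"
  shows "x + t *\<^sub>R axis j 1 \<in> orthant"
  using x t unfolding orthant_def by (auto simp: axis_def)

lemma qd_path: "qd q (x + t *\<^sub>R axis j 1) = qd q x + t * q $ j"
  by (simp add: qd_inner inner_add_right inner_axis)

lemma kkt_agent:
  fixes v :: "real^'m::finite \<Rightarrow> real"
  assumes val: "valuation v" and hom: "homogeneous r v"
    and r: "0 < r" "r \<le> 1" and rho: "0 < \<rho>" "\<rho> \<le> 1" and x: "x \<in> orthant" and q: "q \<in> orthant"
    and L: "Lc \<rho> q v x"
    and diff: "\<And>y. y \<in> orthant \<Longrightarrow> y \<noteq> 0 \<Longrightarrow> v differentiable (at y within orthant)"
  shows "\<exists>d. partial_deriv v x j d \<and> v x powr (\<rho> - 1) * d \<le> q $ j \<and>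
            (x $ j > 0 \<longrightarrow> v x powr (\<rho> - 1) * d = q $ j)"
proof -
  have v0: "v 0 = 0" and vnn: "\<And>y. y \<in> orthant \<Longrightarrow> v y \<ge> 0" using val by (auto simp: valuation_def)
  have qj: "q $ j \<ge> 0" using q by (simp add: orthant_def)
  show ?thesis
  proof (cases "x = 0")
    case True
    then have "v x = 0" using v0 by simp
    then have rr: "r = 1 \<and> \<rho> = 1" using V0_L[OF val hom r rho x q L] by simp
    have "((\<lambda>t. t * v (axis j 1)) has_real_derivative v (axis j 1)) (at 0 within {0..})"
      by (rule derivative_eq_intros refl | simp)+
    then have "((\<lambda>t. v (x + t *\<^sub>R axis j 1)) has_real_derivative v (axis j 1)) (at 0 within {0..})"
    proof (rule has_field_derivative_transform_within[of _ _ _ _ 1])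
      fix t :: real assume "t \<in> {0..}"
      then show "t * v (axis j 1) = v (x + t *\<^sub>R axis j 1)"
        using hom_val[OF hom, of t "axis j 1"] rr True by (simp add: orthant_def axis_def)
    qed auto
    then show ?thesis using \<open>v x = 0\<close> qj True unfolding partial_deriv_def by auto
  next
    case False
    obtain D where dv: "(v has_derivative D) (at x within orthant)"
      using diff[OF x False] unfolding differentiable_def by blast
    define S where "S = {- (x $ j)..}"
    have pd: "((\<lambda>t. v (x + t *\<^sub>R axis j 1)) has_real_derivative D (axis j 1)) (at 0 within S)"
      by (rule path_deriv[OF dv]) (use x orthant_path in \<open>auto simp: S_def\<close>)
    have xj: "x $ j \<ge> 0" using x by (simp add: orthant_def)
    have sub: "{0..} \<subseteq> S" using xj by (auto simp: S_def)
    have PD: "partial_deriv v x j (D (axis j 1))"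
      unfolding partial_deriv_def by (rule DERIV_subset[OF pd sub])
    show ?thesis
    proof (cases "v x = 0")
      case True
      then have rr: "r = 1 \<and> \<rho> = 1" using V0_L[OF val hom r rho x q L] by simp
      have "(1/\<rho>) * v 0 powr \<rho> - qd q 0 \<le> (1/\<rho>) * v x powr \<rho> - qd q x"
        using L orthant_zero unfolding Lc_def by blast
      then have "qd q x \<le> 0" using True v0 by (simp add: qd_zero)
      moreover have "q $ j * x $ j \<le> qd q x"
        unfolding qd_def using q x
        by (intro member_le_sum) (auto simp: orthant_def)
      ultimately have "q $ j * x $ j \<le> 0" by simp
      then have "x $ j > 0 \<longrightarrow> q $ j = 0" using qj by (auto simp: mult_le_0_iff)
      then show ?thesis using PD True qj by auto
    next
      case False
      then have V: "v x > 0" using vnn[OF x] by simp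
      define \<phi> where "\<phi> t = (1/\<rho>) * v (x + t *\<^sub>R axis j 1) powr \<rho> - t * q $ j" for t
      have le: "\<phi> t \<le> \<phi> 0" if "t \<in> S" for t
      proof -
        have "x + t *\<^sub>R axis j 1 \<in> orthant" using that orthant_path[OF x] by (simp add: S_def)
        then have "(1/\<rho>) * v (x + t *\<^sub>R axis j 1) powr \<rho> - qd q (x + t *\<^sub>R axis j 1) \<le> (1/\<rho>) * v x powr \<rho> - qd q x"
          using L unfolding Lc_def by blast
        then show ?thesis by (simp add: \<phi>_def qd_path)
      qed
      have dphi: "(\<phi> has_real_derivative (1/\<rho>) * (\<rho> * v x powr (\<rho> - 1) * D (axis j 1)) - 1 * q $ j) (at 0 within S)"
      proof -
        have "((\<lambda>t. v (x + t *\<^sub>R axis j 1) powr \<rho>) has_real_derivative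
                 \<rho> * v (x + 0 *\<^sub>R axis j 1) powr (\<rho> - 1) * D (axis j 1)) (at 0 within S)"
          by (rule DERIV_chain2[OF has_real_derivative_powr pd]) (use V in simp)
        then have "((\<lambda>t. (1/\<rho>) * v (x + t *\<^sub>R axis j 1) powr \<rho> - t * q $ j) has_real_derivative
                 (1/\<rho>) * (\<rho> * v x powr (\<rho> - 1) * D (axis j 1)) - 1 * q $ j) (at 0 within S)"
          by (intro DERIV_diff DERIV_cmult) (auto intro!: derivative_eq_intros)
        then show ?thesis unfolding \<phi>_def .
      qed
      have deq: "(1/\<rho>) * (\<rho> * v x powr (\<rho> - 1) * D (axis j 1)) - 1 * q $ j = v x powr (\<rho> - 1) * D (axis j 1) - q $ j"
        using rho by simp
      have "v x powr (\<rho> - 1) * D (axis j 1) - q $ j \<le> 0"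
        using deriv_nonpos_right[of \<phi>, OF DERIV_subset[OF dphi sub]] le sub deq by auto
      moreover have "x $ j > 0 \<longrightarrow> v x powr (\<rho> - 1) * D (axis j 1) - q $ j = 0"
      proof
        assume xp: "x $ j > 0"
        have "{- (x $ j)<..} \<subseteq> S" by (auto simp: S_def)
        from DERIV_subset[OF dphi this] have "(\<phi> has_real_derivative (1/\<rho>) * (\<rho> * v x powr (\<rho> - 1) * D (axis j 1)) - 1 * q $ j) (at 0)"
          using at_within_open[of 0 "{- (x $ j)<..}"] xp by simp
        from DERIV_local_max[OF this xp] le show "v x powr (\<rho> - 1) * D (axis j 1) - q $ j = 0"
          using deq by (auto simp: S_def abs_if split: if_splits)
      qed
      ultimately show ?thesis using PD by auto
    qed
  qed
qed

theorem theorem1: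
  fixes v :: "'a::finite \<Rightarrow> real^'m::finite \<Rightarrow> real"
    and r \<rho> :: real
    and x :: "'a \<Rightarrow> real^'m"
  assumes r: "0 < r" "r \<le> 1"
    and val: "\<And>i. valuation (v i)"
    and hom: "\<And>i. homogeneous r (v i)"
    and conc: "\<And>i. concave_on orthant (v i)"
    and diff: "\<And>i y. y \<in> orthant \<Longrightarrow> y \<noteq> 0 \<Longrightarrow> v i differentiable (at y within orthant)"
    and rho: "0 < \<rho>" "\<rho> \<le> 1"
    and alloc: "allocation x"
  shows "(x \<in> Psi v \<rho> \<longleftrightarrow> (\<exists>q\<in>orthant. walrasian_eq v x (ces_price r \<rho> q)))
         \<and> (\<forall>q\<in>orthant. walrasian_eq v x (ces_price r \<rho> q) \<longrightarrow> optimal_lagrange v \<rho> q)"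
proof -
  have v0: "\<And>i. v i 0 = 0" and vnn: "\<And>i y. y \<in> orthant \<Longrightarrow> v i y \<ge> 0"
    using val by (auto simp: valuation_def)
  have xo: "\<And>i. x i \<in> orthant" using alloc unfolding allocation_def by blast
  have P1: "x \<in> Psi v \<rho> \<longleftrightarrow> (\<exists>q\<in>orthant. walrasian_eq v x (ces_price r \<rho> q))"
  proof
    assume "x \<in> Psi v \<rho>"
    then have "P_optimal v \<rho> x" using Psi_iff[of v, OF vnn rho(1)] by blast
    from exists_q[OF conc vnn v0 rho this] obtain q where
      q: "q \<in> orthant" "\<forall>i. Lc \<rho> q (v i) (x i)" "\<forall>j. (\<Sum>i\<in>UNIV. x i $ j) < 1 \<longrightarrow> q $ j = 0"
      by blast
    have "walrasian_eq v x (ces_price r \<rho> q)"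
      by (rule L_to_WE[OF val hom r rho q(1) alloc]) (use q in auto)
    then show "\<exists>q\<in>orthant. walrasian_eq v x (ces_price r \<rho> q)" using q(1) by blast
  next
    assume "\<exists>q\<in>orthant. walrasian_eq v x (ces_price r \<rho> q)"
    then obtain q where q: "q \<in> orthant" "walrasian_eq v x (ces_price r \<rho> q)" by blast
    have "P_optimal v \<rho> x" by (rule WE_opt[OF val hom r rho q(1) alloc q(2)])
    then show "x \<in> Psi v \<rho>" using Psi_iff[of v, OF vnn rho(1)] by blast
  qed
  have P2: "optimal_lagrange v \<rho> q" if q: "q \<in> orthant" and we: "walrasian_eq v x (ces_price r \<rho> q)" for q
    unfolding optimal_lagrange_def
  proof (intro conjI exI[of _ x] allI impI)
    show "q \<in> orthant" by fact
    show "P_optimal v \<rho> x" by (rule WE_opt[OF val hom r rho q alloc we])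
  next
    fix i j
    show "\<exists>d. partial_deriv (v i) (x i) j d \<and> v i (x i) powr (\<rho> - 1) * d \<le> q $ j \<and>
            (0 < x i $ j \<longrightarrow> v i (x i) powr (\<rho> - 1) * d = q $ j)"
      by (rule kkt_agent[OF val hom r rho xo q WE_to_L[OF val hom r rho q we]]) (rule diff)
  next
    fix j assume s: "(\<Sum>i\<in>UNIV. x i $ j) < 1"
    show "q $ j = 0"
    proof (rule ccontr)
      assume "q $ j \<noteq> 0"
      then have "q $ j > 0" using q by (simp add: orthant_def order.not_eq_order_implies_strict)
      then show False using WE_clear[OF r(1) rho(1) we] s by simp
    qed
  qed
  show ?thesis using P1 P2 by blast
qed

end
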